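(* Let $r,k,s_1,\dots,s_k$ be nonnegative integers, $\Gamma$ the complete bipartite supernova quiver with these parameters, and $\boldsymbol\mu=(\mu^1,\dots,\mu^k)$ a $k$-tuple of nonzero partitions, $\mu^i=(\mu^i_1\ge\cdots\ge\mu^i_{s_i+1}\ge0)$. Assume $k>1$ or $v_{(1;0)}>1$, where $\mathbf{v}_{\boldsymbol\mu}=(v_a)_{a\in I}$. Then $\mathbf{v}_{\boldsymbol\mu}\in M_\Gamma$ if and only if $r\geq|\mu^i|+\mu^i_1$ for all $i=1,\dots,k$.
   Context: $\Gamma$ has vertex set $I$ consisting of $(l)$, $l=1,\dots,r$, and $(i;j)$, $i=1,\dots,k$, $j=0,\dots,s_i$; its edges are: one edge between $(l)$ and $(i;0)$ for every $l,i$, and one edge between $(i;j)$ and $(i;j-1)$ for $1\le j\le s_i$. The dimension vector $\mathbf{v}_{\boldsymbol\mu}$: $v_{(l)}=1$, $v_{(i;0)}=|\mu^i|$, $v_{(i;j)}=|\mu^i|-\sum_{f=1}^j\mu^i_f$ for $1\le j\le s_i$. Let $(\cdot,\cdot)$ be the symmetric bilinear form on $\mathbb{Z}^I$ with $(\mathbf{e}_a,\mathbf{e}_a)=2$ and $(\mathbf{e}_a,\mathbf{e}_b)=-$(number of edges joining $a$ and $b$) for $a\neq b$. $M_\Gamma$ is the set of nonzero $\mathbf{u}\in\mathbb{Z}_{\ge0}^I$ with connected support such that $(\mathbf{e}_a,\mathbf{u})\le0$ for all $a\in I$. *)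

theory Defs
  imports Main
begin

text \<open>A graph is given by a vertex set I and an edge-count function E (number of
edges joining a and b). Vectors in Z^I are functions vertex => int vanishing off I.\<close>

definition cartan :: "('v \<Rightarrow> 'v \<Rightarrow> nat) \<Rightarrow> 'v \<Rightarrow> 'v \<Rightarrow> int" where
  "cartan E a b = (if a = b then 2 else - int (E a b))"

definition bform :: "'v set \<Rightarrow> ('v \<Rightarrow> 'v \<Rightarrow> nat) \<Rightarrow> ('v \<Rightarrow> int) \<Rightarrow> ('v \<Rightarrow> int) \<Rightarrow> int" where
  "bform I E x y = (\<Sum>a\<in>I. \<Sum>b\<in>I. x a * y b * cartan E a b)"

definition basis_vec :: "'v \<Rightarrow> 'v \<Rightarrow> int" where
  "basis_vec a = (\<lambda>b. if b = a then 1 else 0)"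

definition supp :: "'v set \<Rightarrow> ('v \<Rightarrow> int) \<Rightarrow> 'v set" where
  "supp I u = {a \<in> I. u a \<noteq> 0}"

definition connected_in :: "('v \<Rightarrow> 'v \<Rightarrow> nat) \<Rightarrow> 'v set \<Rightarrow> bool" where
  "connected_in E S \<longleftrightarrow> S \<noteq> {} \<and>
     (\<forall>a\<in>S. \<forall>b\<in>S. (\<lambda>x y. x \<in> S \<and> y \<in> S \<and> 0 < E x y)\<^sup>*\<^sup>* a b)"

definition M_Gamma :: "'v set \<Rightarrow> ('v \<Rightarrow> 'v \<Rightarrow> nat) \<Rightarrow> ('v \<Rightarrow> int) set" where
  "M_Gamma I E = {u. (\<forall>a. a \<notin> I \<longrightarrow> u a = 0) \<and> (\<forall>a\<in>I. 0 \<le> u a)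
      \<and> (\<exists>a\<in>I. u a \<noteq> 0)
      \<and> connected_in E (supp I u)
      \<and> (\<forall>a\<in>I. bform I E (basis_vec a) u \<le> 0)}"

text \<open>Vertices: SL l stands for (l), SA i j stands for (i;j).\<close>
datatype sv = SL nat | SA nat nat

definition sn_vertices :: "nat \<Rightarrow> nat \<Rightarrow> (nat \<Rightarrow> nat) \<Rightarrow> sv set" where
  "sn_vertices r k s = {SL l | l. 1 \<le> l \<and> l \<le> r} \<union> {SA i j | i j. 1 \<le> i \<and> i \<le> k \<and> j \<le> s i}"

fun sn_edges :: "sv \<Rightarrow> sv \<Rightarrow> nat" where
  "sn_edges (SL l) (SA i j) = (if j = 0 then 1 else 0)"
| "sn_edges (SA i j) (SL l) = (if j = 0 then 1 else 0)"
| "sn_edges (SA i j) (SA i' j') = (if i = i' \<and> (j = Suc j' \<or> j' = Suc j) then 1 else 0)"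
| "sn_edges (SL l) (SL l') = 0"

text \<open>Partitions: mu i f is the f-th part of mu^i, f = 1..s_i+1.\<close>
definition psize :: "(nat \<Rightarrow> nat) \<Rightarrow> (nat \<Rightarrow> nat \<Rightarrow> nat) \<Rightarrow> nat \<Rightarrow> nat" where
  "psize s mu i = (\<Sum>f = 1..s i + 1. mu i f)"

definition is_partition_tuple :: "nat \<Rightarrow> (nat \<Rightarrow> nat) \<Rightarrow> (nat \<Rightarrow> nat \<Rightarrow> nat) \<Rightarrow> bool" where
  "is_partition_tuple k s mu \<longleftrightarrow>
     (\<forall>i. 1 \<le> i \<and> i \<le> k \<longrightarrow> (\<forall>f. 1 \<le> f \<and> f \<le> s i \<longrightarrow> mu i (Suc f) \<le> mu i f))"

definition vdim :: "nat \<Rightarrow> nat \<Rightarrow> (nat \<Rightarrow> nat) \<Rightarrow> (nat \<Rightarrow> nat \<Rightarrow> nat) \<Rightarrow> sv \<Rightarrow> int" where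
  "vdim r k s mu a =
     (if a \<in> sn_vertices r k s then
        (case a of SL l \<Rightarrow> 1
                 | SA i j \<Rightarrow> int (psize s mu i) - int (\<Sum>f = 1..j. mu i f))
      else 0)"

end

theory Submission
  imports Defs
begin

lemma memI[simp]:
  "SL l \<in> sn_vertices r k s \<longleftrightarrow> 1 \<le> l \<and> l \<le> r"
  "SA i j \<in> sn_vertices r k s \<longleftrightarrow> 1 \<le> i \<and> i \<le> k \<and> j \<le> s i"
  by (auto simp: sn_vertices_def)

lemma finI: "finite (sn_vertices r k s)"
proof -
  have "sn_vertices r k s \<subseteq> SL ` {1..r} \<union> (\<lambda>(i,j). SA i j) ` (SIGMA i:{1..k}. {..s i})"
    by (auto simp: sn_vertices_def)
  then show ?thesis by (rule finite_subset) auto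
qed

lemma edge_le1: "sn_edges a b \<le> 1" by (cases a; cases b) auto

lemma bform_basis:
  assumes "finite I" "a \<in> I"
  shows "bform I E (basis_vec a) u = 2 * u a - (\<Sum>b\<in>I-{a}. int (E a b) * u b)"
proof -
  have "bform I E (basis_vec a) u = (\<Sum>x\<in>I. if x = a then (\<Sum>b\<in>I. u b * cartan E a b) else 0)"
    unfolding bform_def basis_vec_def by (auto intro!: sum.cong simp: ac_simps)
  also have "\<dots> = (\<Sum>b\<in>I. u b * cartan E a b)" using assms by simp
  also have "\<dots> = u a * cartan E a a + (\<Sum>b\<in>I-{a}. u b * cartan E a b)"
    using assms by (simp add: sum.remove)
  also have "(\<Sum>b\<in>I-{a}. u b * cartan E a b) = - (\<Sum>b\<in>I-{a}. int (E a b) * u b)"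
  proof -
    have "(\<Sum>b\<in>I-{a}. u b * cartan E a b) = (\<Sum>b\<in>I-{a}. - (int (E a b) * u b))"
      by (rule sum.cong) (auto simp: cartan_def)
    then show ?thesis by (simp add: sum_negf)
  qed
  finally show ?thesis by (simp add: cartan_def)
qed

lemma nbr_sum:
  assumes "finite I"
  shows "(\<Sum>b\<in>I-{a}. int (sn_edges a b) * u b) = (\<Sum>b\<in>{b\<in>I-{a}. sn_edges a b = 1}. u b)"
proof -
  have "(\<Sum>b\<in>I-{a}. int (sn_edges a b) * u b) = (\<Sum>b\<in>I-{a}. if sn_edges a b = 1 then u b else 0)"
  proof (rule sum.cong)
    fix b show "int (sn_edges a b) * u b = (if sn_edges a b = 1 then u b else 0)"
      using edge_le1[of a b] by (cases "sn_edges a b") auto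
  qed simp
  also have "\<dots> = (\<Sum>b\<in>{b\<in>I-{a}. sn_edges a b = 1}. u b)"
    using sum.inter_filter[of "I-{a}" u "\<lambda>b. sn_edges a b = 1"] assms by simp
  finally show ?thesis .
qed

lemma N1: "{b\<in>sn_vertices r k s-{SL l}. sn_edges (SL l) b = 1} = (\<lambda>i. SA i 0) ` {1..k}"
  by (rule set_eqI, case_tac x) auto

lemma N2: "{b\<in>sn_vertices r k s-{SA i 0}. sn_edges (SA i 0) b = 1}
   = SL ` {1..r} \<union> (if 1 \<le> s i \<and> 1 \<le> i \<and> i \<le> k then {SA i 1} else {})"
  by (rule set_eqI, case_tac x) auto

lemma N3: "1 \<le> j \<Longrightarrow> 1 \<le> i \<Longrightarrow> i \<le> k \<Longrightarrow> j \<le> s i \<Longrightarrow>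
   {b\<in>sn_vertices r k s-{SA i j}. sn_edges (SA i j) b = 1}
   = {SA i (j-1)} \<union> (if j < s i then {SA i (Suc j)} else {})"
  by (rule set_eqI, case_tac x) auto


theorem lemma2p6:
  fixes r k :: nat and s :: "nat \<Rightarrow> nat" and mu :: "nat \<Rightarrow> nat \<Rightarrow> nat"
  assumes "is_partition_tuple k s mu"
    and "\<forall>i. 1 \<le> i \<and> i \<le> k \<longrightarrow> psize s mu i > 0"
    and "1 < k \<or> (1 \<le> k \<and> vdim r k s mu (SA 1 0) > 1)"
  shows "vdim r k s mu \<in> M_Gamma (sn_vertices r k s) sn_edges \<longleftrightarrow>
         (\<forall>i. 1 \<le> i \<and> i \<le> k \<longrightarrow> psize s mu i + mu i 1 \<le> r)"
proof -
  define I where "I = sn_vertices r k s"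
  define V where "V = vdim r k s mu"
  define P where "P i = int (psize s mu i)" for i
  define S where "S i j = int (\<Sum>f=1..j. mu i f)" for i j
  have finI': "finite I" unfolding I_def by (rule finI)
  have VSL: "V (SL l) = 1" if "1 \<le> l" "l \<le> r" for l
    using that by (simp add: V_def vdim_def)
  have VSA: "V (SA i j) = P i - S i j" if "1 \<le> i" "i \<le> k" "j \<le> s i" for i j
    using that by (simp add: V_def vdim_def P_def S_def)
  have Ssuc: "S i (Suc j) = S i j + int (mu i (Suc j))" for i j
    by (simp add: S_def sum.cl_ivl_Suc)
  have S0: "S i 0 = 0" for i by (simp add: S_def)
  have PS: "P i = S i (s i + 1)" for i by (simp add: P_def S_def psize_def)
  have Sle: "S i j \<le> P i" if "j \<le> s i + 1" for i j
  proof -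
    have "(\<Sum>f=1..j. mu i f) \<le> (\<Sum>f=1..s i + 1. mu i f)"
      by (rule sum_mono2) (use that in auto)
    then have "S i j \<le> S i (s i + 1)" unfolding S_def by (simp only: of_nat_le_iff)
    then show ?thesis using PS[of i] by simp
  qed
  have Ppos: "P i > 0" if "1 \<le> i" "i \<le> k" for i
    using assms(2) that by (simp add: P_def)
  have k1: "1 \<le> k" using assms(3) by auto
  have gen: "bform I sn_edges (basis_vec a) V = 2 * V a - (\<Sum>b\<in>{b\<in>I-{a}. sn_edges a b = 1}. V b)"
    if "a \<in> I" for a
    using bform_basis[OF finI' that] nbr_sum[OF finI'] by simp
  have bSL: "bform I sn_edges (basis_vec (SL l)) V = 2 - (\<Sum>i=1..k. P i)" if "1 \<le> l" "l \<le> r" for l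
  proof -
    have "(\<Sum>b\<in>(\<lambda>i. SA i 0) ` {1..k}. V b) = (\<Sum>i=1..k. V (SA i 0))"
      by (rule sum.reindex[unfolded comp_def]) (auto simp: inj_on_def)
    also have "\<dots> = (\<Sum>i=1..k. P i)" by (rule sum.cong) (auto simp: VSA S0)
    finally show ?thesis using gen[of "SL l"] that N1[of r k s l] VSL[OF that]
      by (simp add: I_def)
  qed
  have bA0: "bform I sn_edges (basis_vec (SA i 0)) V = P i + int (mu i 1) - int r"
    if "1 \<le> i" "i \<le> k" for i
  proof -
    define X where "X = (if 1 \<le> s i \<and> 1 \<le> i \<and> i \<le> k then {SA i 1} else {})"
    have sl: "(\<Sum>b\<in>SL ` {1..r}. V b) = int r"
    proof -
      have "(\<Sum>b\<in>SL ` {1..r}. V b) = (\<Sum>l=1..r. V (SL l))"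
        by (rule sum.reindex[unfolded comp_def]) (auto simp: inj_on_def)
      also have "\<dots> = (\<Sum>l=1..r. 1)" by (rule sum.cong) (auto simp: VSL)
      finally show ?thesis by simp
    qed
    have "(\<Sum>b\<in>SL ` {1..r} \<union> X. V b) = (\<Sum>b\<in>SL ` {1..r}. V b) + (\<Sum>b\<in>X. V b)"
      by (rule sum.union_disjoint) (auto simp: X_def)
    moreover have "(\<Sum>b\<in>X. V b) = (if 1 \<le> s i then P i - int (mu i 1) else 0)"
      using that by (auto simp: X_def VSA Ssuc[of i 0, simplified] S0)
    moreover have "s i = 0 \<Longrightarrow> P i = int (mu i 1)" using PS[of i] Ssuc[of i 0] S0 by simp
    ultimately show ?thesis using gen[of "SA i 0"] that N2[of r k s i] sl VSA[of i 0]
      unfolding X_def[symmetric] by (auto simp: I_def S0)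
  qed
  have bAj: "bform I sn_edges (basis_vec (SA i j)) V = int (mu i (Suc j)) - int (mu i j)"
    if h: "1 \<le> i" "i \<le> k" "1 \<le> j" "j \<le> s i" for i j
  proof -
    obtain j' where j': "j = Suc j'" using h(3) by (cases j) auto
    define X where "X = (if j < s i then {SA i (Suc j)} else {})"
    have "(\<Sum>b\<in>{SA i (j-1)} \<union> X. V b) = V (SA i (j-1)) + (\<Sum>b\<in>X. V b)"
      by (subst sum.union_disjoint) (auto simp: X_def)
    moreover have "(\<Sum>b\<in>X. V b) = (if j < s i then P i - S i j - int (mu i (Suc j)) else 0)"
      using h by (auto simp: X_def VSA Ssuc)
    moreover have "V (SA i (j-1)) = P i - S i j + int (mu i j)"
      using h by (simp add: VSA j' Ssuc)
    moreover have "\<not> j < s i \<Longrightarrow> P i = S i j + int (mu i (Suc j))"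
      using PS[of i] Ssuc[of i j] h by simp
    ultimately show ?thesis using gen[of "SA i j"] h N3[of j i k s r] VSA[of i j]
      unfolding X_def[symmetric] by (auto simp: I_def)
  qed
  show ?thesis unfolding V_def[symmetric] I_def[symmetric]
  proof
    assume "V \<in> M_Gamma I sn_edges"
    then have "\<forall>a\<in>I. bform I sn_edges (basis_vec a) V \<le> 0" by (simp add: M_Gamma_def)
    then have B: "\<forall>a\<in>I. bform I sn_edges (basis_vec a) V \<le> 0" .
    show "\<forall>i. 1 \<le> i \<and> i \<le> k \<longrightarrow> psize s mu i + mu i 1 \<le> r"
    proof (intro allI impI)
      fix i assume i: "1 \<le> i \<and> i \<le> k"
      then have "SA i 0 \<in> I" by (simp add: I_def)
      with B have "bform I sn_edges (basis_vec (SA i 0)) V \<le> 0" by blast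
      with bA0[of i] i show "psize s mu i + mu i 1 \<le> r" by (simp add: P_def)
    qed
  next
    assume R: "\<forall>i. 1 \<le> i \<and> i \<le> k \<longrightarrow> psize s mu i + mu i 1 \<le> r"
    have r1: "1 \<le> r" using R Ppos[of 1] k1 by (force simp: P_def)
    have Vout: "\<forall>a. a \<notin> I \<longrightarrow> V a = 0" by (simp add: V_def vdim_def I_def)
    have Vnn: "\<forall>a\<in>I. 0 \<le> V a"
    proof
      fix a assume a: "a \<in> I"
      show "0 \<le> V a"
      proof (cases a)
        case (SL l) then show ?thesis using a VSL by (simp add: I_def)
      next
        case (SA i j) then show ?thesis using a VSA[of i j] Sle[of j i] by (simp add: I_def)
      qed
    qed
    have ex: "\<exists>a\<in>I. V a \<noteq> 0"
      using k1 VSA[of 1 0] S0 Ppos[of 1] by (intro bexI[of _ "SA 1 0"]) (auto simp: I_def)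
    have bf: "\<forall>a\<in>I. bform I sn_edges (basis_vec a) V \<le> 0"
    proof
      fix a assume a: "a \<in> I"
      show "bform I sn_edges (basis_vec a) V \<le> 0"
      proof (cases a)
        case (SL l)
        have "(\<Sum>i=1..k. (1::int)) \<le> (\<Sum>i=1..k. P i)"
          by (rule sum_mono) (use Ppos in force)
        moreover have "2 \<le> (\<Sum>i=1..k. P i)"
        proof (cases "1 < k")
          case True with calculation show ?thesis by simp
        next
          case False
          then have "k = 1" using k1 by simp
          then show ?thesis using assms(3) VSA[of 1 0] S0 unfolding V_def by simp
        qed
        then show ?thesis using SL a bSL[of l] by (simp add: I_def)
      next
        case (SA i j)
        show ?thesis
        proof (cases j)
          case 0
          then have i: "1 \<le> i" "i \<le> k" using SA a by (auto simp: I_def)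
          then have "psize s mu i + mu i 1 \<le> r" using R by blast
          then have "int (psize s mu i) + int (mu i 1) \<le> int r" by linarith
          then show ?thesis using SA 0 bA0[OF i] by (simp add: P_def)
        next
          case (Suc j')
          have "mu i (Suc j) \<le> mu i j" using assms(1) a SA Suc
            unfolding is_partition_tuple_def by (simp add: I_def)
          then show ?thesis using SA a bAj[of i j] Suc by (simp add: I_def)
        qed
      qed
    qed
    define Sp where "Sp = supp I V"
    define Rl where "Rl = (\<lambda>x y. x \<in> Sp \<and> y \<in> Sp \<and> 0 < sn_edges x y)"
    have SpSL: "SL l \<in> Sp" if "1 \<le> l" "l \<le> r" for l
      using that VSL by (simp add: Sp_def supp_def I_def)
    have SpA: "SA i j \<in> Sp \<longleftrightarrow> 1 \<le> i \<and> i \<le> k \<and> j \<le> s i \<and> P i - S i j \<noteq> 0" for i j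
      using VSA[of i j] by (auto simp: Sp_def supp_def I_def)
    have chain: "SA i j \<in> Sp \<longrightarrow> Rl\<^sup>*\<^sup>* (SA i j) (SL 1) \<and> Rl\<^sup>*\<^sup>* (SL 1) (SA i j)" for i j
    proof (induction j)
      case 0
      show ?case
      proof
        assume h: "SA i 0 \<in> Sp"
        have "Rl (SA i 0) (SL 1)" "Rl (SL 1) (SA i 0)" using h SpSL[of 1] r1 by (auto simp: Rl_def)
        then show "Rl\<^sup>*\<^sup>* (SA i 0) (SL 1) \<and> Rl\<^sup>*\<^sup>* (SL 1) (SA i 0)" by auto
      qed
    next
      case (Suc j)
      show ?case
      proof
        assume h: "SA i (Suc j) \<in> Sp"
        then have hi: "1 \<le> i" "i \<le> k" "Suc j \<le> s i" "P i - S i (Suc j) \<noteq> 0" using SpA by auto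
        have "S i (Suc j) \<le> P i" using Sle[of "Suc j" i] hi by simp
        then have "S i j < P i" using hi Ssuc[of i j] by simp
        then have h2: "SA i j \<in> Sp" using hi SpA by auto
        have "Rl (SA i j) (SA i (Suc j))" "Rl (SA i (Suc j)) (SA i j)" using h h2 by (auto simp: Rl_def)
        then show "Rl\<^sup>*\<^sup>* (SA i (Suc j)) (SL 1) \<and> Rl\<^sup>*\<^sup>* (SL 1) (SA i (Suc j))"
          using Suc.IH h2
          by (meson converse_rtranclp_into_rtranclp rtranclp.rtrancl_into_rtrancl)
      qed
    qed
    have toSL: "Rl\<^sup>*\<^sup>* a (SL 1) \<and> Rl\<^sup>*\<^sup>* (SL 1) a" if "a \<in> Sp" for a
    proof (cases a)
      case (SA i j) then show ?thesis using chain that by blast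
    next
      case (SL l)
      have A: "SA 1 0 \<in> Sp" using SpA[of 1 0] k1 S0 Ppos[of 1] by simp
      have l: "SL l \<in> Sp" using that SL by simp
      have "Rl (SL l) (SA 1 0)" "Rl (SA 1 0) (SL l)" "Rl (SL 1) (SA 1 0)" "Rl (SA 1 0) (SL 1)"
        using A l SpSL[of 1] r1 by (auto simp: Rl_def)
      then show ?thesis using SL
        by (meson converse_rtranclp_into_rtranclp r_into_rtranclp)
    qed
    have conn: "connected_in sn_edges Sp"
      unfolding connected_in_def
    proof (intro conjI ballI)
      show "Sp \<noteq> {}" using SpSL[of 1] r1 by auto
    next
      fix a b assume "a \<in> Sp" "b \<in> Sp"
      then have "Rl\<^sup>*\<^sup>* a b" using toSL by (meson rtranclp_trans)
      then show "(\<lambda>x y. x \<in> Sp \<and> y \<in> Sp \<and> 0 < sn_edges x y)\<^sup>*\<^sup>* a b" unfolding Rl_def .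
    qed
    show "V \<in> M_Gamma I sn_edges"
      unfolding M_Gamma_def using Vout Vnn ex bf conn by (simp add: Sp_def)
  qed
qed

end
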